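(* Let $G$ be a left-orderable group and let $\preceq$ be a left-ordering of $G$ that is an isolated point of $\mathcal{LO}(G)$ and is not Conradian. Let $C=C_\preceq(G)$ be its Conradian soul, which admits only finitely many left-orderings $\preceq_1,\dots,\preceq_{2^n}$ (with $\preceq_1$ the restriction of $\preceq$ to $C$), and for each $j$ let $\preceq^j$ be the left-ordering of $G$ defined by $g\succ^j id$ iff either $g\notin C$ and $g\succ id$, or $g\in C$ and $g\succ_j id$. Then at least one of the left-orderings $\preceq^j$ is an accumulation point of the set of conjugates $\{\preceq_h:h\in G\}$ of $\preceq$.
   Context: A left-ordering is a total order invariant under left multiplication; it is Conradian if for all $f\succ id$, $g\succ id$ there is $n\in\mathbb{N}$ with $fg^n\succ g$. The Conradian soul $C_\preceq(G)$ is the maximal $\preceq$-convex subgroup on which $\preceq$ restricts to a Conradian ordering. The conjugate $\preceq_h$ is defined by $g\succ_h id$ iff $hgh^{-1}\succ id$. $\mathcal{LO}(G)$ carries the topology whose basic neighbourhoods of an ordering are the sets of left-orderings agreeing with it on a given finite subset of $G$. *)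

theory Defs
  imports Main
begin

text \<open>The group G is a type of class group_add (written additively, not necessarily
commutative): x + y is the group product xy, 0 is id, -x is the inverse.\<close>

definition left_ordering_on :: "'g::group_add set \<Rightarrow> ('g \<Rightarrow> 'g \<Rightarrow> bool) \<Rightarrow> bool" where
  "left_ordering_on H R \<longleftrightarrow>
     (\<forall>x\<in>H. \<not> R x x) \<and>
     (\<forall>x\<in>H. \<forall>y\<in>H. \<forall>z\<in>H. R x y \<longrightarrow> R y z \<longrightarrow> R x z) \<and>
     (\<forall>x\<in>H. \<forall>y\<in>H. x \<noteq> y \<longrightarrow> R x y \<or> R y x) \<and>
     (\<forall>g\<in>H. \<forall>x\<in>H. \<forall>y\<in>H. R x y \<longrightarrow> R (g + x) (g + y))"

abbreviation left_ordering :: "('g::group_add \<Rightarrow> 'g \<Rightarrow> bool) \<Rightarrow> bool" where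
  "left_ordering R \<equiv> left_ordering_on UNIV R"

text \<open>Basic neighbourhoods in LO(G): orderings agreeing on a finite set F
(same set of positive elements among F).\<close>
definition agree_on :: "'g::group_add set \<Rightarrow> ('g \<Rightarrow> 'g \<Rightarrow> bool) \<Rightarrow> ('g \<Rightarrow> 'g \<Rightarrow> bool) \<Rightarrow> bool" where
  "agree_on F R S \<longleftrightarrow> (\<forall>g\<in>F. R 0 g \<longleftrightarrow> S 0 g)"

definition isolated_ordering :: "('g::group_add \<Rightarrow> 'g \<Rightarrow> bool) \<Rightarrow> bool" where
  "isolated_ordering R \<longleftrightarrow>
     (\<exists>F. finite F \<and> (\<forall>S. left_ordering S \<and> agree_on F R S \<longrightarrow> S = R))"

definition accumulation_ordering ::
  "('g::group_add \<Rightarrow> 'g \<Rightarrow> bool) \<Rightarrow> ('g \<Rightarrow> 'g \<Rightarrow> bool) set \<Rightarrow> bool" where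
  "accumulation_ordering R A \<longleftrightarrow>
     (\<forall>F. finite F \<longrightarrow> (\<exists>S\<in>A. S \<noteq> R \<and> agree_on F R S))"

definition gpow :: "'g::group_add \<Rightarrow> nat \<Rightarrow> 'g" where
  "gpow g n = ((\<lambda>x. x + g) ^^ n) 0"

definition conradian_on :: "('g::group_add \<Rightarrow> 'g \<Rightarrow> bool) \<Rightarrow> 'g set \<Rightarrow> bool" where
  "conradian_on R H \<longleftrightarrow>
     (\<forall>f\<in>H. \<forall>g\<in>H. R 0 f \<longrightarrow> R 0 g \<longrightarrow> (\<exists>n::nat. n \<ge> 1 \<and> R g (f + gpow g n)))"

definition is_subgroup :: "'g::group_add set \<Rightarrow> bool" where
  "is_subgroup H \<longleftrightarrow> 0 \<in> H \<and> (\<forall>x\<in>H. \<forall>y\<in>H. x + y \<in> H) \<and> (\<forall>x\<in>H. - x \<in> H)"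

definition convex_subgroup :: "('g::group_add \<Rightarrow> 'g \<Rightarrow> bool) \<Rightarrow> 'g set \<Rightarrow> bool" where
  "convex_subgroup R C \<longleftrightarrow> is_subgroup C \<and>
     (\<forall>a\<in>C. \<forall>b\<in>C. \<forall>g. R a g \<and> R g b \<longrightarrow> g \<in> C)"

definition conradian_soul :: "('g::group_add \<Rightarrow> 'g \<Rightarrow> bool) \<Rightarrow> 'g set \<Rightarrow> bool" where
  "conradian_soul R C \<longleftrightarrow> convex_subgroup R C \<and> conradian_on R C \<and>
     (\<forall>D. convex_subgroup R D \<and> conradian_on R D \<and> C \<subseteq> D \<longrightarrow> D = C)"

text \<open>Conjugate ordering: g \<succ>_h id iff h g h^-1 \<succ> id; as a left-ordering,
x \<prec>_h y iff id \<prec>_h x^-1 y.\<close>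
definition conj_ord :: "('g::group_add \<Rightarrow> 'g \<Rightarrow> bool) \<Rightarrow> 'g \<Rightarrow> 'g \<Rightarrow> 'g \<Rightarrow> bool" where
  "conj_ord R h x y \<longleftrightarrow> R 0 (h + (- x + y) + - h)"

definition ext_ord :: "('g::group_add \<Rightarrow> 'g \<Rightarrow> bool) \<Rightarrow> 'g set \<Rightarrow> ('g \<Rightarrow> 'g \<Rightarrow> bool) \<Rightarrow> 'g \<Rightarrow> 'g \<Rightarrow> bool" where
  "ext_ord R C Rc x y \<longleftrightarrow> ((- x + y) \<notin> C \<and> R 0 (- x + y)) \<or> ((- x + y) \<in> C \<and> Rc 0 (- x + y))"

end

theory Submission
  imports Defs
begin



declare add_uminus_conv_diff[simp del]

locale LO =
  fixes R :: "'g::group_add \<Rightarrow> 'g \<Rightarrow> bool"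
  assumes lo: "left_ordering R"
begin

lemma irr: "\<not> R x x" using lo unfolding left_ordering_on_def by blast
lemma tr: "R x y \<Longrightarrow> R y z \<Longrightarrow> R x z" using lo unfolding left_ordering_on_def by blast
lemma tot: "x \<noteq> y \<Longrightarrow> R x y \<or> R y x" using lo unfolding left_ordering_on_def by blast
lemma linv: "R x y \<Longrightarrow> R (g+x) (g+y)" using lo unfolding left_ordering_on_def by blast
lemma linv_iff: "R (g+x) (g+y) \<longleftrightarrow> R x y"
proof
  assume "R (g+x) (g+y)"
  then have "R (-g+(g+x)) (-g+(g+y))" by (rule linv)
  then show "R x y" by (simp add: add.assoc[symmetric])
qed (rule linv)
lemma asym: "R x y \<Longrightarrow> \<not> R y x" using tr irr by blast

definition le where "le a b \<longleftrightarrow> R a b \<or> a = b"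
definition betw where "betw a y b \<longleftrightarrow> (le a y \<and> le y b) \<or> (le b y \<and> le y a)"

lemma le_linv: "le x y \<Longrightarrow> le (g+x) (g+y)" unfolding le_def using linv by blast
lemma le_trans: "le x y \<Longrightarrow> le y z \<Longrightarrow> le x z" unfolding le_def using tr by blast
lemma le_antisym: "le x y \<Longrightarrow> le y x \<Longrightarrow> x = y" unfolding le_def using asym by blast
lemma le_total: "le x y \<or> le y x" unfolding le_def using tot by blast
lemma betw_linv: "betw a y b \<Longrightarrow> betw (g+a) (g+y) (g+b)" unfolding betw_def using le_linv by blast
lemma betw_sym: "betw a y b \<longleftrightarrow> betw b y a" unfolding betw_def by blast
lemma betw_split: "betw a w b \<Longrightarrow> betw a w c \<or> betw c w b"
  unfolding betw_def using le_total le_trans by blast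
lemma betw_self: "betw a b b" unfolding betw_def using le_total unfolding le_def by blast
lemma betw_zero: "betw a y a \<Longrightarrow> y = a" unfolding betw_def using le_antisym by blast

definition V where "V H = {x. \<forall>y. betw 0 y x \<longrightarrow> y \<in> H}"

lemma V_sub: "V H \<subseteq> H" unfolding V_def using betw_self by blast

lemma V_neg:
  assumes H: "is_subgroup H" and x: "x \<in> V H" shows "- x \<in> V H"
proof -
  { fix y assume "betw 0 y (-x)"
    then have "betw (x+0) (x+y) (x + -x)" by (rule betw_linv)
    then have "betw 0 (x+y) x" using betw_sym by simp
    then have "x + y \<in> H" using x unfolding V_def by blast
    moreover have "x \<in> H" using x V_sub by blast
    ultimately have "-x + (x+y) \<in> H" using H unfolding is_subgroup_def by blast
    then have "y \<in> H" by (simp add: add.assoc[symmetric]) }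
  then show ?thesis unfolding V_def by blast
qed

lemma V_conv:
  assumes H: "is_subgroup H" shows "convex_subgroup R (V H)"
proof -
  have z: "0 \<in> V H" unfolding V_def using betw_zero H unfolding is_subgroup_def by blast
  have n: "\<forall>x\<in>V H. -x \<in> V H" using V_neg H by blast
  have a: "\<forall>x\<in>V H. \<forall>y\<in>V H. x + y \<in> V H"
  proof (intro ballI)
    fix x y assume x: "x \<in> V H" and y: "y \<in> V H"
    { fix z assume "betw 0 z (x+y)"
      then have "betw (-x+0) (-x+z) (-x+(x+y))" by (rule betw_linv)
      then have "betw (-x) (-x+z) y" by (simp add: add.assoc[symmetric])
      then have "betw (-x) (-x+z) 0 \<or> betw 0 (-x+z) y" by (rule betw_split)
      then have "-x+z \<in> H" using n x y betw_sym unfolding V_def by blast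
      moreover have "x \<in> H" using x V_sub by blast
      ultimately have "x + (-x+z) \<in> H" using H unfolding is_subgroup_def by blast
      then have "z \<in> H" by (simp add: add.assoc[symmetric]) }
    then show "x + y \<in> V H" unfolding V_def by blast
  qed
  have c: "\<forall>a\<in>V H. \<forall>b\<in>V H. \<forall>g. R a g \<and> R g b \<longrightarrow> g \<in> V H"
  proof (intro ballI allI impI)
    fix a b g assume a: "a \<in> V H" and b: "b \<in> V H" and ab: "R a g \<and> R g b"
    { fix y assume yb: "betw 0 y g"
      have "betw 0 y b \<or> betw 0 y a" using yb ab unfolding betw_def le_def using tr by blast
      then have "y \<in> H" using a b unfolding V_def by blast }
    then show "g \<in> V H" unfolding V_def by blast
  qed
  show ?thesis unfolding convex_subgroup_def is_subgroup_def using z n a c by blast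
qed

end




locale SOUL = LO +
  fixes C :: "'a set"
  assumes soul: "conradian_soul R C"
begin

lemma Csub: "is_subgroup C" using soul unfolding conradian_soul_def convex_subgroup_def by blast
lemma C0: "0 \<in> C" using Csub unfolding is_subgroup_def by blast
lemma Cadd: "x \<in> C \<Longrightarrow> y \<in> C \<Longrightarrow> x + y \<in> C" using Csub unfolding is_subgroup_def by blast
lemma Cneg: "x \<in> C \<Longrightarrow> -x \<in> C" using Csub unfolding is_subgroup_def by blast
lemma Cneg_iff: "-x \<in> C \<longleftrightarrow> x \<in> C" using Cneg[of "-x"] Cneg[of x] by auto
lemma Cconv: "a \<in> C \<Longrightarrow> b \<in> C \<Longrightarrow> R a g \<Longrightarrow> R g b \<Longrightarrow> g \<in> C"
  using soul unfolding conradian_soul_def convex_subgroup_def by blast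
lemma Ccon: "conradian_on R C" using soul unfolding conradian_soul_def by blast
lemma maxim: "convex_subgroup R D \<Longrightarrow> conradian_on R D \<Longrightarrow> C \<subseteq> D \<Longrightarrow> D = C"
  using soul unfolding conradian_soul_def by blast

lemma addC_l: "c \<in> C \<Longrightarrow> x \<notin> C \<Longrightarrow> c + x \<notin> C"
proof
  assume "c \<in> C" "x \<notin> C" "c + x \<in> C"
  then have "-c + (c + x) \<in> C" using Cadd Cneg by blast
  then show False using \<open>x \<notin> C\<close> by (simp add: add.assoc[symmetric])
qed
lemma addC_r: "c \<in> C \<Longrightarrow> x \<notin> C \<Longrightarrow> x + c \<notin> C"
proof
  assume "c \<in> C" "x \<notin> C" "x + c \<in> C"
  then have "(x + c) + -c \<in> C" using Cadd Cneg by blast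
  then show False using \<open>x \<notin> C\<close> by (simp add: add.assoc)
qed

lemma above: "z \<notin> C \<Longrightarrow> R 0 z \<Longrightarrow> c \<in> C \<Longrightarrow> R c z"
  using Cconv[of 0 c z] C0 tot[of c z] by blast
lemma below: "z \<notin> C \<Longrightarrow> R z 0 \<Longrightarrow> c \<in> C \<Longrightarrow> R z c"
  using Cconv[of c 0 z] C0 tot[of c z] by blast

lemma coset:
  assumes x: "x \<notin> C" "R 0 x" and c: "c \<in> C" "c' \<in> C" shows "R c' (x + c)"
proof -
  have y: "x + c \<notin> C" using addC_r x c by blast
  have "R 0 (x + c)"
  proof (rule ccontr)
    assume "\<not> R 0 (x+c)"
    then have "R (x+c) 0" using tot y C0 by force
    then have "R (-x + (x+c)) (-x + 0)" by (rule linv)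
    then have "R c (-x)" by (simp add: add.assoc[symmetric])
    moreover have "R (-x) 0" using linv[OF x(2), of "-x"] by simp
    moreover have "-x \<notin> C" using x Cneg_iff by blast
    ultimately show False using below[of "-x" c] c asym by blast
  qed
  then show ?thesis using above y c by blast
qed

lemma pos_sum: "g \<notin> C \<Longrightarrow> R 0 g \<Longrightarrow> f \<in> C \<Longrightarrow> R 0 (f + g)"
  using above[of g "-f"] Cneg linv[of "-f" g f] by (simp add: add.assoc[symmetric])

lemma gpow1: "gpow g 1 = g" by (simp add: gpow_def)
lemma gpow2: "gpow g 2 = g + g" by (simp add: gpow_def numeral_2_eq_2)

definition Good where "Good p \<longleftrightarrow> (\<forall>g. g \<notin> C \<longrightarrow> (R p (g+p) \<longleftrightarrow> R 0 g))"

lemma C_V: "C \<subseteq> H \<Longrightarrow> C \<subseteq> V H"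
proof
  fix c assume CH: "C \<subseteq> H" and c: "c \<in> C"
  { fix y assume "betw 0 y c"
    then have "y \<in> C" using Cconv[of 0 c y] Cconv[of c 0 y] C0 c unfolding betw_def le_def by blast
    then have "y \<in> H" using CH by blast }
  then show "c \<in> V H" unfolding V_def by blast
qed

lemma conj_sub: "is_subgroup {y. a + y + -a \<in> C}"
  unfolding is_subgroup_def
proof (intro conjI ballI)
  show "0 \<in> {y. a + y + - a \<in> C}" using C0 by simp
next
  fix x y assume "x \<in> {y. a + y + - a \<in> C}" "y \<in> {y. a + y + - a \<in> C}"
  then have "(a + x + -a) + (a + y + -a) \<in> C" using Cadd by simp
  moreover have "(a + x + -a) + (a + y + -a) = a + (x + y) + -a" by (simp add: add.assoc del: add_uminus_conv_diff)
  ultimately show "x + y \<in> {y. a + y + - a \<in> C}" by simp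
next
  fix x assume "x \<in> {y. a + y + - a \<in> C}"
  then have "-(a + x + -a) \<in> C" using Cneg by simp
  moreover have "-(a + x + -a) = a + -x + -a" by (simp add: add.assoc minus_add)
  ultimately show "-x \<in> {y. a + y + - a \<in> C}" by simp
qed

end



context SOUL begin

lemma case1:
  assumes allgood: "\<forall>p. R 0 p \<and> le p m \<and> p \<notin> C \<longrightarrow> Good p"
  and m: "R 0 m"
  and E: "convex_subgroup R E" "C \<subseteq> E" "E \<noteq> C" "m \<notin> E"
  shows False
proof -
  have "\<not> conradian_on R E" using maxim E by blast
  then obtain f g where fg: "f \<in> E" "g \<in> E" "R 0 f" "R 0 g"
    and nc: "\<forall>n. n \<ge> 1 \<longrightarrow> \<not> R g (f + gpow g n)"
    unfolding conradian_on_def by blast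
  have n1: "\<not> R g (f + g)" using nc[rule_format, of 1] by (simp add: gpow_def)
  have n2: "\<not> R g (f + (g + g))" using nc[rule_format, of 2] by (simp add: gpow_def numeral_2_eq_2)
  have gC: "g \<notin> C"
  proof
    assume g: "g \<in> C"
    show False
    proof (cases "f \<in> C")
      case True
      then show False using Ccon g fg nc unfolding conradian_on_def by blast
    next
      case False
      then show False using coset[of f g g] g fg n1 by blast
    qed
  qed
  have E0: "0 \<in> E" using E unfolding convex_subgroup_def is_subgroup_def by blast
  have gm: "R g m"
  proof (rule ccontr)
    assume "\<not> R g m"
    then have "m = g \<or> R m g" using tot by blast
    then show False
    proof
      assume "m = g" then show False using fg E by blast
    next
      assume "R m g"
      then have "m \<in> E" using E(1) E0 fg m unfolding convex_subgroup_def by blast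
      then show False using E by blast
    qed
  qed
  have G: "Good g" using allgood fg gm gC unfolding le_def by blast
  show False
  proof (cases "f \<in> C")
    case False
    then show False using G fg n1 unfolding Good_def by blast
  next
    case True
    have h: "f + g \<notin> C" using addC_l True gC by blast
    have hp: "R 0 (f + g)" using pos_sum gC fg True by blast
    have "R g ((f + g) + g)" using G h hp unfolding Good_def by blast
    then show False using n2 by (simp add: add.assoc)
  qed
qed

lemma bigV:
  assumes case2: "\<forall>E. convex_subgroup R E \<and> C \<subseteq> E \<and> E \<noteq> C \<longrightarrow> m \<in> E"
  and H: "is_subgroup H" "C \<subseteq> H" "t \<in> V H" "t \<notin> C"
  and p: "R 0 p" "le p m"
  shows "p \<in> H"
proof -
  have "convex_subgroup R (V H)" using V_conv H by blast
  moreover have "C \<subseteq> V H" using C_V H by blast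
  moreover have "V H \<noteq> C" using H by blast
  ultimately have "m \<in> V H" using case2 by blast
  moreover have "betw 0 p m" using p unfolding betw_def le_def by blast
  ultimately show ?thesis unfolding V_def by blast
qed

lemma subH: "is_subgroup H \<Longrightarrow> x \<in> H \<Longrightarrow> y \<in> H \<Longrightarrow> x + y \<in> H"
  and subH0: "is_subgroup H \<Longrightarrow> 0 \<in> H"
  and subHn: "is_subgroup H \<Longrightarrow> x \<in> H \<Longrightarrow> -x \<in> H"
  unfolding is_subgroup_def by blast+

lemma inV:
  assumes H: "is_subgroup H" and t: "R 0 t" "t \<in> H"
  and cl: "\<And>y. R 0 y \<Longrightarrow> R y t \<Longrightarrow> y \<in> H"
  shows "t \<in> V H"
proof -
  { fix y assume "betw 0 y t"
    then have "y = 0 \<or> y = t \<or> (R 0 y \<and> R y t)" unfolding betw_def le_def using t asym tr by blast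
    then have "y \<in> H" using subH0[OF H] t cl by blast }
  then show ?thesis unfolding V_def by blast
qed

lemma lemM:
  assumes case2: "\<forall>E. convex_subgroup R E \<and> C \<subseteq> E \<and> E \<noteq> C \<longrightarrow> m \<in> E"
  and p: "R 0 p" "le p m" "p \<notin> C" "Good p"
  and c: "c \<in> C"
  shows "-p + c + p \<in> C"
proof (rule ccontr)
  assume k: "-p + c + p \<notin> C"
  obtain c0 where c0: "c0 \<in> C" "-p + -c0 + p \<notin> C" "R 0 (-p + -c0 + p)"
  proof (cases "R 0 (-p + c + p)")
    case True
    then show ?thesis using that[of "-c"] k Cneg c by simp
  next
    case False
    then have "R (-p + c + p) 0" using tot k C0 by force
    then have "R (-(-p + c + p) + (-p + c + p)) (-(-p + c + p) + 0)" by (rule linv)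
    then have "R 0 (-(-p + c + p))" by simp
    moreover have "-(-p + c + p) = -p + -c + p" by (simp add: minus_add add.assoc)
    ultimately show ?thesis using that[of c] k c Cneg_iff by (metis)
  qed
  define t where "t = -p + -c0 + p"
  define H where "H = {y. p + y + -p \<in> C}"
  have H: "is_subgroup H" unfolding H_def by (rule conj_sub)
  have cl: "y \<in> H" if y: "R 0 y" "R y t" for y
  proof (rule ccontr)
    assume "y \<notin> H"
    define g where "g = p + y + -p"
    have gC: "g \<notin> C" using \<open>y \<notin> H\<close> unfolding H_def g_def by simp
    have gp: "g + p = p + y" unfolding g_def by (simp add: add.assoc)
    have "R p (p + y)" using linv[OF y(1), of p] by simp
    then have g0: "R 0 g" using p(4) gC gp unfolding Good_def by metis
    define w where "w = c0 + g"
    have wC: "w \<notin> C" unfolding w_def using addC_l c0 gC by blast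
    have w0: "R 0 w" unfolding w_def using pos_sum gC g0 c0 by blast
    have r1: "R p (w + p)" using p(4) wC w0 unfolding Good_def by blast
    have "R (p + y) (p + t)" using linv[OF y(2)] .
    moreover have "p + t = -c0 + p" unfolding t_def by (simp add: add.assoc[symmetric])
    ultimately have "R (c0 + (p + y)) (c0 + (-c0 + p))" using linv by metis
    then have "R (c0 + (g + p)) p" using gp by (simp add: add.assoc[symmetric])
    then have "R (w + p) p" unfolding w_def by (simp add: add.assoc)
    then show False using r1 asym by blast
  qed
  have "p + t + -p = -c0" unfolding t_def by (simp add: add.assoc)
  then have tH: "t \<in> H" unfolding H_def using c0 Cneg by simp
  have t0: "R 0 t" "t \<notin> C" using c0 unfolding t_def by auto
  have CH: "C \<subseteq> H"
  proof
    fix c' assume c': "c' \<in> C"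
    show "c' \<in> H"
    proof (cases "c' = 0")
      case True then show ?thesis using subH0[OF H] by simp
    next
      case False
      then consider "R 0 c'" | "R c' 0" using tot by blast
      then show ?thesis
      proof cases
        case 1 then show ?thesis using cl above[OF t0(2) t0(1) c'] by blast
      next
        case 2
        then have "R 0 (-c')" using linv[OF 2, of "-c'"] by simp
        moreover have "-c' \<in> C" using Cneg c' by blast
        ultimately have "-c' \<in> H" using cl above[OF t0(2) t0(1)] by blast
        then show ?thesis using subHn[OF H, of "-c'"] by simp
      qed
    qed
  qed
  have "t \<in> V H" using inV[OF H t0(1) tH] cl by blast
  then have "p \<in> H" using bigV[OF case2 H CH _ t0(2) p(1) p(2)] by blast
  then have "p \<in> C" unfolding H_def by (simp add: add.assoc)
  then show False using p by blast
qed

end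



context SOUL begin

lemma lemM':
  assumes case2: "\<forall>E. convex_subgroup R E \<and> C \<subseteq> E \<and> E \<noteq> C \<longrightarrow> m \<in> E"
  and p: "R 0 p" "le p m" "p \<notin> C" "Good p"
  and c: "c \<in> C"
  shows "p + c + -p \<in> C"
proof (rule ccontr)
  assume k: "p + c + -p \<notin> C"
  have M: "\<And>c. c \<in> C \<Longrightarrow> -p + c + p \<in> C" using lemM[OF case2 p] by blast
  obtain c0 where c0: "c0 \<in> C" "p + c0 + -p \<notin> C" "R 0 (p + c0 + -p)"
  proof (cases "R 0 (p + c + -p)")
    case True
    then show ?thesis using that[of c] k c by simp
  next
    case False
    then have "R (p + c + -p) 0" using tot k C0 by force
    then have "R (-(p + c + -p) + (p + c + -p)) (-(p + c + -p) + 0)" by (rule linv)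
    then have "R 0 (-(p + c + -p))" by simp
    moreover have "-(p + c + -p) = p + -c + -p" by (simp add: minus_add add.assoc)
    ultimately show ?thesis using that[of "-c"] k c Cneg_iff by (metis)
  qed
  define h where "h = p + c0 + -p"
  define H where "H = {y. -p + y + p \<in> C}"
  have H: "is_subgroup H" unfolding H_def using conj_sub[of "-p"] by simp
  have CH: "C \<subseteq> H" unfolding H_def using M by blast
  have "-p + h + p = c0" unfolding h_def by (simp add: add.assoc)
  then have hH: "h \<in> H" unfolding H_def using c0 by simp
  have h0: "R 0 h" "h \<notin> C" using c0 unfolding h_def by auto
  have cl: "y \<in> H" if y: "R 0 y" "R y h" for y
  proof (cases "y \<in> C")
    case True then show ?thesis using CH by blast
  next
    case yC: False
    show ?thesis
    proof (rule ccontr)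
      assume "y \<notin> H"
      define k where "k = -p + y + p"
      have kC: "k \<notin> C" using \<open>y \<notin> H\<close> unfolding H_def k_def by simp
      define w where "w = -h + y"
      have w0: "R w 0" using linv[OF y(2), of "-h"] unfolding w_def by simp
      have wC: "w \<notin> C"
      proof
        assume "w \<in> C"
        then have "h + w \<in> H" using subH[OF H hH] CH by blast
        then show False using \<open>y \<notin> H\<close> unfolding w_def by (simp add: add.assoc[symmetric])
      qed
      have "R p (y + p)" using p(4) yC y(1) unfolding Good_def by blast
      then have "R (-p + p) (-p + (y + p))" by (rule linv)
      then have k0: "R 0 k" unfolding k_def by (simp add: add.assoc)
      have "R c0 k" using above[OF kC k0 c0(1)] .
      then have "R (p + c0) (p + k)" by (rule linv)
      moreover have "p + k = y + p" unfolding k_def by (simp add: add.assoc[symmetric])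
      moreover have "p + c0 = h + p" unfolding h_def by (simp add: add.assoc)
      ultimately have "R (h + p) (y + p)" by simp
      then have "R (-h + (h + p)) (-h + (y + p))" by (rule linv)
      then have "R p (w + p)" unfolding w_def by (simp add: add.assoc[symmetric])
      then have "R 0 w" using p(4) wC unfolding Good_def by blast
      then show False using w0 asym by blast
    qed
  qed
  have "h \<in> V H" using inV[OF H h0(1) hH] cl by blast
  then have "p \<in> H" using bigV[OF case2 H CH _ h0(2) p(1) p(2)] by blast
  then have "p \<in> C" unfolding H_def by (simp add: add.assoc)
  then show False using p by blast
qed

definition NQ where "NQ = {x. \<forall>h. h \<notin> C \<and> R 0 h \<longrightarrow>
   (-x + h + x \<notin> C \<and> R 0 (-x + h + x)) \<and> (x + h + -x \<notin> C \<and> R 0 (x + h + -x))}"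

lemma NQ_sub: "is_subgroup NQ"
  unfolding is_subgroup_def
proof (intro conjI ballI)
  show "0 \<in> NQ" unfolding NQ_def by simp
next
  fix x y assume x: "x \<in> NQ" and y: "y \<in> NQ"
  show "x + y \<in> NQ" unfolding NQ_def mem_Collect_eq
  proof (intro allI impI)
    fix h assume h: "h \<notin> C \<and> R 0 h"
    have a: "-x + h + x \<notin> C \<and> R 0 (-x + h + x)" "x + h + -x \<notin> C \<and> R 0 (x + h + -x)"
      using x h unfolding NQ_def by blast+
    have b: "-y + (-x + h + x) + y \<notin> C \<and> R 0 (-y + (-x + h + x) + y)"
      using y a(1) unfolding NQ_def by blast
    have b2: "y + h + -y \<notin> C \<and> R 0 (y + h + -y)"
      using y h unfolding NQ_def by blast
    have b3: "x + (y + h + -y) + -x \<notin> C \<and> R 0 (x + (y + h + -y) + -x)"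
      using x b2 unfolding NQ_def by blast
    have e1: "-(x + y) + h + (x + y) = -y + (-x + h + x) + y" by (simp add: minus_add add.assoc)
    have e2: "(x + y) + h + -(x + y) = x + (y + h + -y) + -x" by (simp add: minus_add add.assoc)
    show "(- (x + y) + h + (x + y) \<notin> C \<and> R 0 (- (x + y) + h + (x + y))) \<and>
          (x + y + h + - (x + y) \<notin> C \<and> R 0 (x + y + h + - (x + y)))"
      using b b3 e1 e2 by simp
  qed
next
  fix x assume x: "x \<in> NQ"
  then show "-x \<in> NQ" unfolding NQ_def by simp
qed

lemma C_NQ: "C \<subseteq> NQ"
proof
  fix c assume c: "c \<in> C"
  show "c \<in> NQ" unfolding NQ_def mem_Collect_eq
  proof (intro allI impI conjI)
    fix h assume h: "h \<notin> C \<and> R 0 h"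
    show "-c + h + c \<notin> C" using addC_l addC_r c h Cneg by (metis add.assoc)
    show "c + h + -c \<notin> C" using addC_l addC_r c h Cneg by (metis add.assoc)
    have "R c (h + c)" using coset h c by blast
    then have "R (-c + c) (-c + (h + c))" by (rule linv)
    then show "R 0 (-c + h + c)" by (simp add: add.assoc)
    have "R (-c) (h + -c)" using coset h c Cneg by blast
    then have "R (c + -c) (c + (h + -c))" by (rule linv)
    then show "R 0 (c + h + -c)" by (simp add: add.assoc)
  qed
qed

lemma good_NQ:
  assumes case2: "\<forall>E. convex_subgroup R E \<and> C \<subseteq> E \<and> E \<noteq> C \<longrightarrow> m \<in> E"
  and p: "R 0 p" "le p m" "p \<notin> C" "Good p"
  shows "p \<in> NQ"
  unfolding NQ_def mem_Collect_eq
proof (intro allI impI conjI)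
  have M: "\<And>c. c \<in> C \<Longrightarrow> -p + c + p \<in> C" using lemM[OF case2 p] by blast
  have M': "\<And>c. c \<in> C \<Longrightarrow> p + c + -p \<in> C" using lemM'[OF case2 p] by blast
  fix h assume h: "h \<notin> C \<and> R 0 h"
  show "-p + h + p \<notin> C"
  proof
    assume "-p + h + p \<in> C"
    then have "p + (-p + h + p) + -p \<in> C" using M' by blast
    then show False using h by (simp add: add.assoc)
  qed
  have "R p (h + p)" using p(4) h unfolding Good_def by blast
  then have "R (-p + p) (-p + (h + p))" by (rule linv)
  then show "R 0 (-p + h + p)" by (simp add: add.assoc)
  show kC: "p + h + -p \<notin> C"
  proof
    assume "p + h + -p \<in> C"
    then have "-p + (p + h + -p) + p \<in> C" using M by blast
    then show False using h by (simp add: add.assoc)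
  qed
  have "R p (p + h)" using linv h by fastforce
  moreover have "p + h + -p + p = p + h" by (simp add: add.assoc)
  ultimately have "R p ((p + h + -p) + p)" by simp
  then show "R 0 (p + h + -p)" using p(4) kC unfolding Good_def by blast
qed

lemma final:
  assumes allgood: "\<forall>p. R 0 p \<and> le p m \<and> p \<notin> C \<longrightarrow> Good p"
  and case2: "\<forall>E. convex_subgroup R E \<and> C \<subseteq> E \<and> E \<noteq> C \<longrightarrow> m \<in> E"
  and m: "R 0 m" "m \<notin> C"
  shows False
proof -
  have mV: "m \<in> V NQ"
  proof -
    { fix y assume "betw 0 y m"
      then have y: "le 0 y \<and> le y m" unfolding betw_def le_def using m asym tr by blast
      have "y \<in> NQ"
      proof (cases "y \<in> C")
        case True then show ?thesis using C_NQ by blast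
      next
        case False
        then have "R 0 y" using y C0 unfolding le_def by blast
        then show ?thesis using good_NQ[OF case2] allgood y False by blast
      qed }
    then show ?thesis unfolding V_def by blast
  qed
  have cs: "convex_subgroup R (V NQ)" using V_conv NQ_sub by blast
  have CV: "C \<subseteq> V NQ" using C_V C_NQ by blast
  have con: "conradian_on R (V NQ)"
    unfolding conradian_on_def
  proof (intro ballI impI)
    fix f g assume f: "f \<in> V NQ" and g: "g \<in> V NQ" and f0: "R 0 f" and g0: "R 0 g"
    have gN: "g \<in> NQ" using g V_sub by blast
    show "\<exists>n\<ge>1. R g (f + gpow g n)"
    proof (cases "g \<in> C")
      case gC: True
      show ?thesis
      proof (cases "f \<in> C")
        case True then show ?thesis using Ccon gC f0 g0 unfolding conradian_on_def by blast
      next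
        case False
        then have "R g (f + g)" using coset f0 gC by blast
        then show ?thesis by (intro exI[of _ 1]) (simp add: gpow_def)
      qed
    next
      case gC: False
      show ?thesis
      proof (cases "f \<in> C")
        case False
        then have "R 0 (-g + f + g)" using gN f0 unfolding NQ_def by blast
        then have "R (g + 0) (g + (-g + f + g))" by (rule linv)
        then have "R g (f + g)" by (simp add: add.assoc[symmetric])
        then show ?thesis by (intro exI[of _ 1]) (simp add: gpow_def)
      next
        case True
        have h: "f + g \<notin> C" "R 0 (f + g)" using addC_l True gC pos_sum g0 by blast+
        then have "R 0 (-g + (f + g) + g)" using gN unfolding NQ_def by blast
        then have "R (g + 0) (g + (-g + (f + g) + g))" by (rule linv)
        then have "R g (f + (g + g))" by (simp add: add.assoc[symmetric])
        then show ?thesis by (intro exI[of _ 2]) (simp add: gpow_def numeral_2_eq_2)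
      qed
    qed
  qed
  have "V NQ = C" using maxim cs con CV by blast
  then show False using mV m by blast
qed

lemma key_window:
  assumes m: "R 0 m" "m \<notin> C"
  shows "\<exists>p. R 0 p \<and> le p m \<and> p \<notin> C \<and> \<not> Good p"
proof (rule ccontr)
  assume "\<not> ?thesis"
  then have allgood: "\<forall>p. R 0 p \<and> le p m \<and> p \<notin> C \<longrightarrow> Good p" by blast
  show False
  proof (cases "\<exists>E. convex_subgroup R E \<and> C \<subseteq> E \<and> E \<noteq> C \<and> m \<notin> E")
    case True
    then show False using case1[OF allgood m(1)] by blast
  next
    case False
    then show False using final[OF allgood _ m] by blast
  qed
qed

end



definition fip :: "'a set set \<Rightarrow> bool" where
  "fip M \<longleftrightarrow> (\<forall>F. F \<subseteq> M \<longrightarrow> finite F \<longrightarrow> \<Inter>F \<noteq> {})"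

lemma fipD: "fip M \<Longrightarrow> F \<subseteq> M \<Longrightarrow> finite F \<Longrightarrow> \<Inter>F \<noteq> {}"
  unfolding fip_def by blast
lemma nfipE: "\<not> fip M \<Longrightarrow> \<exists>F. F \<subseteq> M \<and> finite F \<and> \<Inter>F = {}"
  unfolding fip_def by blast

lemma ultra_exists:
  fixes B :: "'a set set"
  assumes B: "fip B"
  shows "\<exists>M. B \<subseteq> M \<and> fip M \<and> (\<forall>X. X \<in> M \<or> -X \<in> M)"
proof -
  define A where "A = {M. B \<subseteq> M \<and> fip M}"
  have "\<forall>Ch\<in>chains A. \<exists>U\<in>A. \<forall>X\<in>Ch. X \<subseteq> U"
  proof
    fix Ch assume Ch: "Ch \<in> chains A"
    show "\<exists>U\<in>A. \<forall>X\<in>Ch. X \<subseteq> U"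
    proof (cases "Ch = {}")
      case True then show ?thesis using B unfolding A_def by auto
    next
      case False
      have sub: "Ch \<subseteq> A" and ch: "subset.chain UNIV Ch"
        using Ch unfolding chains_def chain_subset_alt_def by auto
      have "fip (\<Union>Ch)" unfolding fip_def
      proof (intro allI impI)
        fix F assume F: "F \<subseteq> \<Union>Ch" "finite F"
        obtain Bm where "Bm \<in> Ch" "F \<subseteq> Bm"
          using finite_subset_Union_chain[OF F(2) F(1) False ch] by blast
        then show "\<Inter>F \<noteq> {}" using sub F fipD unfolding A_def by blast
      qed
      moreover have "B \<subseteq> \<Union>Ch" using False sub unfolding A_def by blast
      ultimately show ?thesis unfolding A_def by blast
    qed
  qed
  then obtain M where M: "M \<in> A" and max: "\<forall>X\<in>A. M \<subseteq> X \<longrightarrow> X = M"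
    using Zorn_Lemma2[of A] by blast
  have "X \<in> M \<or> -X \<in> M" for X
  proof (rule ccontr)
    assume nX: "\<not> (X \<in> M \<or> -X \<in> M)"
    have nf: "\<not> fip (insert Y M)" if "Y \<notin> M" for Y
    proof
      assume "fip (insert Y M)"
      then have "insert Y M \<in> A" using M unfolding A_def by blast
      then have "insert Y M = M" using max by blast
      then show False using that by blast
    qed
    obtain F1 where F1: "F1 \<subseteq> insert X M" "finite F1" "\<Inter>F1 = {}"
      using nfipE[OF nf[of X]] nX by blast
    obtain F2 where F2: "F2 \<subseteq> insert (-X) M" "finite F2" "\<Inter>F2 = {}"
      using nfipE[OF nf[of "-X"]] nX by blast
    have "(F1 - {X}) \<union> (F2 - {-X}) \<subseteq> M" using F1 F2 by blast
    moreover have "finite ((F1 - {X}) \<union> (F2 - {-X}))" using F1 F2 by blast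
    moreover have "fip M" using M unfolding A_def by blast
    ultimately have "\<Inter>((F1 - {X}) \<union> (F2 - {-X})) \<noteq> {}" using fipD by blast
    then obtain x where x: "x \<in> \<Inter>((F1 - {X}) \<union> (F2 - {-X}))" by blast
    show False
    proof (cases "x \<in> X")
      case True
      then have "x \<in> \<Inter>F1" using x by blast
      then show False using F1 by blast
    next
      case False
      then have "x \<in> \<Inter>F2" using x by blast
      then show False using F2 by blast
    qed
  qed
  then show ?thesis using M unfolding A_def by blast
qed

lemma fip_ne: "fip M \<Longrightarrow> X \<in> M \<Longrightarrow> X \<noteq> {}"
  unfolding fip_def by (drule spec[of _ "{X}"]) auto

lemma ultra_up: "fip M \<Longrightarrow> \<forall>X. X \<in> M \<or> -X \<in> M \<Longrightarrow> X \<in> M \<Longrightarrow> X \<subseteq> Y \<Longrightarrow> Y \<in> M"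
proof (rule ccontr)
  assume a: "fip M" "\<forall>X. X \<in> M \<or> -X \<in> M" "X \<in> M" "X \<subseteq> Y" "Y \<notin> M"
  then have "-Y \<in> M" by blast
  moreover have "{X, -Y} \<subseteq> M" "finite {X, -Y}" using a \<open>-Y \<in> M\<close> by auto
  ultimately have "\<Inter>{X, -Y} \<noteq> {}" using a(1) fipD by blast
  then show False using a by blast
qed

lemma ultra_int: "fip M \<Longrightarrow> \<forall>X. X \<in> M \<or> -X \<in> M \<Longrightarrow> X \<in> M \<Longrightarrow> Y \<in> M \<Longrightarrow> X \<inter> Y \<in> M"
proof (rule ccontr)
  assume a: "fip M" "\<forall>X. X \<in> M \<or> -X \<in> M" "X \<in> M" "Y \<in> M" "X \<inter> Y \<notin> M"
  then have "-(X \<inter> Y) \<in> M" by blast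
  moreover have "{X, Y, -(X\<inter>Y)} \<subseteq> M" "finite {X, Y, -(X\<inter>Y)}" using a \<open>-(X\<inter>Y) \<in> M\<close> by auto
  ultimately have "\<Inter>{X, Y, -(X\<inter>Y)} \<noteq> {}" using a(1) fipD by blast
  then show False by blast
qed




context SOUL begin

lemma abs_pos: "g \<notin> C \<Longrightarrow> \<exists>a. a \<notin> C \<and> R 0 a \<and> (R 0 g \<longrightarrow> a = g) \<and> (R g 0 \<longrightarrow> a = -g)"
proof -
  assume g: "g \<notin> C"
  then have "g \<noteq> 0" using C0 by blast
  then consider "R 0 g" | "R g 0" using tot by blast
  then show ?thesis
  proof cases
    case 1 then show ?thesis using g asym by blast
  next
    case 2
    have "R 0 (-g)" using linv[OF 2, of "-g"] by simp
    then show ?thesis using g Cneg_iff asym 2 by blast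
  qed
qed

lemma lower_bound:
  assumes F: "finite F" and ex: "\<exists>x. x \<notin> C"
  shows "\<exists>m. R 0 m \<and> m \<notin> C \<and> (\<forall>g\<in>F. g \<notin> C \<longrightarrow> (R 0 g \<longrightarrow> le m g) \<and> (R g 0 \<longrightarrow> le m (-g)))"
  using F
proof (induction F rule: finite_induct)
  case empty
  obtain x where "x \<notin> C" using ex by blast
  then show ?case using abs_pos by blast
next
  case (insert g F)
  then obtain m where m: "R 0 m" "m \<notin> C" "\<forall>g\<in>F. g \<notin> C \<longrightarrow> (R 0 g \<longrightarrow> le m g) \<and> (R g 0 \<longrightarrow> le m (-g))"
    by blast
  show ?case
  proof (cases "g \<in> C")
    case True then show ?thesis using m by blast
  next
    case False
    then obtain a where a: "a \<notin> C" "R 0 a" "R 0 g \<longrightarrow> a = g" "R g 0 \<longrightarrow> a = -g"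
      using abs_pos by blast
    define m' where "m' = (if R m a then m else a)"
    have m'1: "le m' m" "le m' a" unfolding m'_def le_def using tot by auto
    have m'2: "R 0 m'" "m' \<notin> C" unfolding m'_def using m a by auto
    show ?thesis
    proof (intro exI[of _ m'] conjI m'2 ballI impI)
      fix h assume h: "h \<in> insert g F" "h \<notin> C"
      show "R 0 h \<Longrightarrow> le m' h"
      proof -
        assume h0: "R 0 h"
        show "le m' h"
        proof (cases "h = g")
          case True then show ?thesis using a h0 m'1 by simp
        next
          case False then show ?thesis using h h0 m m'1 le_trans by blast
        qed
      qed
      show "R h 0 \<Longrightarrow> le m' (-h)"
      proof -
        assume h0: "R h 0"
        show "le m' (-h)"
        proof (cases "h = g")
          case True then show ?thesis using a h0 m'1 by simp
        next
          case False then show ?thesis using h h0 m m'1 le_trans by blast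
        qed
      qed
    qed
  qed
qed

lemma agree:
  assumes p: "R 0 p" "le p m" and g: "g \<notin> C"
  and b: "(R 0 g \<longrightarrow> le m g) \<and> (R g 0 \<longrightarrow> le m (-g))"
  shows "R p (g + p) \<longleftrightarrow> R 0 g"
proof -
  have "g \<noteq> 0" using g C0 by blast
  then consider "R 0 g" | "R g 0" using tot by blast
  then show ?thesis
  proof cases
    case 1
    have "R g (g + p)" using linv[OF p(1), of g] by simp
    moreover have "le p g" using b 1 p le_trans by blast
    ultimately have "R p (g + p)" unfolding le_def using tr by blast
    then show ?thesis using 1 by blast
  next
    case 2
    have "R (-g) (-g + p)" using linv[OF p(1), of "-g"] by simp
    moreover have "le p (-g)" using b 2 p le_trans by blast
    ultimately have "R p (-g + p)" unfolding le_def using tr by blast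
    then have "R (g + p) (g + (-g + p))" by (rule linv)
    then have "R (g + p) p" by (simp add: add.assoc[symmetric])
    then show ?thesis using 2 asym by blast
  qed
qed

lemma key:
  assumes F: "finite F" and ex: "\<exists>x. x \<notin> C"
  shows "\<exists>p. (\<forall>g\<in>F. g \<notin> C \<longrightarrow> (R p (g + p) \<longleftrightarrow> R 0 g)) \<and> \<not> Good p"
proof -
  obtain m where m: "R 0 m" "m \<notin> C" "\<forall>g\<in>F. g \<notin> C \<longrightarrow> (R 0 g \<longrightarrow> le m g) \<and> (R g 0 \<longrightarrow> le m (-g))"
    using lower_bound[OF F ex] by blast
  obtain p where p: "R 0 p" "le p m" "\<not> Good p" using key_window[OF m(1,2)] by blast
  show ?thesis using agree[OF p(1,2)] m(3) p(3) by blast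
qed

end

theorem mainTheorem10:
  fixes R :: "'g::group_add \<Rightarrow> 'g \<Rightarrow> bool" and C :: "'g set"
  assumes "left_ordering R"
    and "isolated_ordering R"
    and "\<not> conradian_on R UNIV"
    and "conradian_soul R C"
  shows "\<exists>Rc. left_ordering_on C Rc \<and>
           accumulation_ordering (ext_ord R C Rc) (range (conj_ord R))"
proof -
  interpret S: SOUL R C using assms by unfold_locales
  have ex: "\<exists>x. x \<notin> C"
  proof (rule ccontr)
    assume "\<not> (\<exists>x. x \<notin> C)"
    then have "C = UNIV" by blast
    then show False using S.Ccon assms(3) by simp
  qed
  define A where "A F = {p. (\<forall>g\<in>F. g \<notin> C \<longrightarrow> (R p (g + p) \<longleftrightarrow> R 0 g)) \<and> \<not> S.Good p}" for F
  have Ane: "A F \<noteq> {}" if F: "finite F" for F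
  proof -
    obtain p where "(\<forall>g\<in>F. g \<notin> C \<longrightarrow> (R p (g + p) \<longleftrightarrow> R 0 g)) \<and> \<not> S.Good p"
      using S.key[OF F ex] by blast
    then have "p \<in> A F" unfolding A_def by simp
    then show ?thesis by blast
  qed
  have Amono: "A F' \<subseteq> A F" if "F \<subseteq> F'" for F F' using that unfolding A_def by auto
  define B where "B = {A F | F. finite F}"
  have Bcov: "finite \<F> \<Longrightarrow> \<F> \<subseteq> B \<Longrightarrow> \<exists>F. finite F \<and> (\<forall>X\<in>\<F>. A F \<subseteq> X)" for \<F>
  proof (induction \<F> rule: finite_induct)
    case empty then show ?case by blast
  next
    case (insert X \<F>)
    then obtain F where F: "finite F" "\<forall>X\<in>\<F>. A F \<subseteq> X" by blast
    obtain F' where F': "finite F'" "X = A F'" using insert unfolding B_def by blast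
    have s1: "A (F \<union> F') \<subseteq> A F" "A (F \<union> F') \<subseteq> A F'" using Amono by auto
    have "\<forall>Y\<in>insert X \<F>. A (F \<union> F') \<subseteq> Y" using F(2) F'(2) s1 by blast
    then show ?case using F F' by blast
  qed
  have "fip B" unfolding fip_def
  proof (intro allI impI)
    fix \<F> assume a: "\<F> \<subseteq> B" "finite \<F>"
    obtain F where "finite F" "\<forall>X\<in>\<F>. A F \<subseteq> X" using Bcov[OF a(2) a(1)] by blast
    then have "A F \<subseteq> \<Inter>\<F>" by blast
    then show "\<Inter>\<F> \<noteq> {}" using Ane[OF \<open>finite F\<close>] by blast
  qed
  then obtain M where M: "B \<subseteq> M" "fip M" "\<forall>X. X \<in> M \<or> -X \<in> M"
    using ultra_exists by blast
  define Tm where "Tm g \<longleftrightarrow> {p. R p (g + p)} \<in> M" for g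
  define Rc where "Rc x y \<longleftrightarrow> Tm (-x + y)" for x y
  have lo: "left_ordering_on C Rc"
    unfolding left_ordering_on_def
  proof (intro conjI ballI impI)
    fix x :: 'g
    have "{p. R p (0 + p)} = {}" using S.irr by simp
    then show "\<not> Rc x x" unfolding Rc_def Tm_def using fip_ne[OF M(2)] by auto
  next
    fix x y z :: 'g assume xy: "Rc x y" and yz: "Rc y z"
    define a where "a = -x + y"
    define b where "b = -y + z"
    have "{p. R p (a + p)} \<inter> {p. R p (b + p)} \<subseteq> {p. R p ((a + b) + p)}"
    proof
      fix p assume "p \<in> {p. R p (a + p)} \<inter> {p. R p (b + p)}"
      then have "R p (a + p)" "R (a + p) (a + (b + p))" using S.linv by auto
      then show "p \<in> {p. R p ((a + b) + p)}" using S.tr by (simp add: add.assoc)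
    qed
    moreover have "{p. R p (a + p)} \<in> M" using xy unfolding Rc_def Tm_def a_def .
    moreover have "{p. R p (b + p)} \<in> M" using yz unfolding Rc_def Tm_def b_def .
    ultimately have "{p. R p ((a + b) + p)} \<in> M"
      using ultra_up[OF M(2,3) ultra_int[OF M(2,3)]] by blast
    moreover have "a + b = -x + z" unfolding a_def b_def by (simp add: add.assoc)
    ultimately show "Rc x z" unfolding Rc_def Tm_def by simp
  next
    fix x y :: 'g assume xy: "x \<noteq> y"
    define a where "a = -x + y"
    have a0: "a \<noteq> 0"
    proof
      assume "a = 0"
      then have "x + a = x" by simp
      then show False using xy unfolding a_def by (simp add: add.assoc[symmetric])
    qed
    have sub: "-{p. R p (a + p)} \<subseteq> {p. R p (-a + p)}"
    proof
      fix p assume "p \<in> -{p. R p (a + p)}"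
      then have "\<not> R p (a + p)" by simp
      moreover have "a + p \<noteq> p"
      proof
        assume "a + p = p"
        then have "a + p + -p = p + -p" by simp
        then show False using a0 by (simp add: add.assoc)
      qed
      ultimately have "R (a + p) p" using S.tot by blast
      then have "R (-a + (a + p)) (-a + p)" by (rule S.linv)
      then show "p \<in> {p. R p (-a + p)}" by (simp add: add.assoc[symmetric])
    qed
    have ma: "-a = -y + x" unfolding a_def by (simp add: minus_add)
    show "Rc x y \<or> Rc y x"
    proof (cases "{p. R p (a + p)} \<in> M")
      case True then show ?thesis unfolding Rc_def Tm_def a_def by simp
    next
      case False
      then have "-{p. R p (a + p)} \<in> M" using M(3) by blast
      then have "{p. R p (-a + p)} \<in> M" using ultra_up[OF M(2,3) _ sub] by blast
      then show ?thesis unfolding Rc_def Tm_def using ma by simp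
    qed
  next
    fix g x y :: 'g assume "Rc x y"
    moreover have "-(g + x) + (g + y) = -x + y" by (simp add: minus_add add.assoc)
    ultimately show "Rc (g + x) (g + y)" unfolding Rc_def by simp
  qed
  have conjeq: "conj_ord R (-p) 0 g \<longleftrightarrow> R p (g + p)" for p g
  proof -
    have "R p (g + p) \<longleftrightarrow> R (-p + p) (-p + (g + p))" using S.linv_iff by blast
    then show ?thesis unfolding conj_ord_def by (simp add: add.assoc)
  qed
  have extc: "ext_ord R C Rc 0 g \<longleftrightarrow> (g \<notin> C \<and> R 0 g) \<or> (g \<in> C \<and> Tm g)" for g
    unfolding ext_ord_def Rc_def by simp
  have acc: "accumulation_ordering (ext_ord R C Rc) (range (conj_ord R))"
    unfolding accumulation_ordering_def
  proof (intro allI impI)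
    fix F :: "'g set" assume F: "finite F"
    define Xs where "Xs g = {p. R p (g + p) \<longleftrightarrow> Tm g}" for g
    have Xs: "Xs g \<in> M" for g
    proof (cases "Tm g")
      case True
      then have "Xs g = {p. R p (g + p)}" unfolding Xs_def by simp
      then show ?thesis using True unfolding Tm_def by simp
    next
      case False
      then have "Xs g = -{p. R p (g + p)}" unfolding Xs_def by auto
      then show ?thesis using False M(3) unfolding Tm_def by metis
    qed
    have "A F \<in> M" using M(1) F unfolding B_def by blast
    then have "insert (A F) (Xs ` F) \<subseteq> M" using Xs by blast
    moreover have "finite (insert (A F) (Xs ` F))" using F by simp
    ultimately have "\<Inter>(insert (A F) (Xs ` F)) \<noteq> {}" using fipD[OF M(2)] by blast
    then obtain p where pA: "p \<in> A F" and pX: "\<forall>g\<in>F. p \<in> Xs g" by blast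
    have agr: "agree_on F (ext_ord R C Rc) (conj_ord R (-p))"
      unfolding agree_on_def
    proof
      fix g assume g: "g \<in> F"
      show "ext_ord R C Rc 0 g \<longleftrightarrow> conj_ord R (-p) 0 g"
      proof (cases "g \<in> C")
        case True then show ?thesis using pX g extc conjeq unfolding Xs_def by auto
      next
        case False then show ?thesis using pA g extc conjeq unfolding A_def by auto
      qed
    qed
    have ne: "conj_ord R (-p) \<noteq> ext_ord R C Rc"
    proof
      assume eq: "conj_ord R (-p) = ext_ord R C Rc"
      obtain g where g: "g \<notin> C" "\<not> (R p (g + p) \<longleftrightarrow> R 0 g)"
        using pA unfolding A_def S.Good_def by blast
      have "ext_ord R C Rc 0 g \<longleftrightarrow> R 0 g" using extc g by blast
      then show False using eq conjeq g by metis
    qed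
    show "\<exists>S\<in>range (conj_ord R). S \<noteq> ext_ord R C Rc \<and> agree_on F (ext_ord R C Rc) S"
      using agr ne by blast
  qed
  show ?thesis using lo acc by blast
qed


end
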